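(* Let $f=f_{TS_1S_2}$ be a probability density on the joint space of continuous real random variables $(T,S_1,S_2)$ such that $f$ and all its marginal densities are bounded from below by some $\xi>0$. Then the global redundancy $$ I^{\mathrm{sx}}_\cap[f]=\int \mathrm{d}t\,\mathrm{d}s_1\,\mathrm{d}s_2\; f(t,s_1,s_2)\, i^{\mathrm{sx}}_\cap[f](t,\{s_1\}\{s_2\}), \qquad i^{\mathrm{sx}}_\cap[f](t,\{s_1\}\{s_2\})=\log_2\left[\frac{f_{TS_1}(t,s_1)+f_{TS_2}(t,s_2)}{f_T(t)\,(f_{S_1}(s_1)+f_{S_2}(s_2))}\right], $$ is a smooth functional of the underlying density $f$.
   Context: $f_T,f_{S_1},f_{S_2},f_{TS_1},f_{TS_2}$ denote the marginal densities of $f$. Smoothness of the functional refers to differentiability (of all orders) of $\epsilon\mapsto I^{\mathrm{sx}}_\cap[f+\epsilon g]$ for perturbation directions $g$. *)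

theory Defs
  imports "HOL-Analysis.Analysis"
begin

text \<open>Joint space of (T,S1,S2): the box X x Y x Z of real sets (the supports of the
  three variables); densities are curried functions f t s1 s2.\<close>

definition M3 :: "(real \<times> real \<times> real) measure" where
  "M3 = lborel \<Otimes>\<^sub>M (lborel \<Otimes>\<^sub>M lborel)"

definition marg_TS1 :: "real set \<Rightarrow> real set \<Rightarrow> real set \<Rightarrow> (real \<Rightarrow> real \<Rightarrow> real \<Rightarrow> real) \<Rightarrow> real \<Rightarrow> real \<Rightarrow> real" where
  "marg_TS1 X Y Z f t s1 = (LINT s2:Z|lborel. f t s1 s2)"

definition marg_TS2 :: "real set \<Rightarrow> real set \<Rightarrow> real set \<Rightarrow> (real \<Rightarrow> real \<Rightarrow> real \<Rightarrow> real) \<Rightarrow> real \<Rightarrow> real \<Rightarrow> real" where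
  "marg_TS2 X Y Z f t s2 = (LINT s1:Y|lborel. f t s1 s2)"

definition marg_T :: "real set \<Rightarrow> real set \<Rightarrow> real set \<Rightarrow> (real \<Rightarrow> real \<Rightarrow> real \<Rightarrow> real) \<Rightarrow> real \<Rightarrow> real" where
  "marg_T X Y Z f t = (LINT s1:Y|lborel. marg_TS1 X Y Z f t s1)"

definition marg_S1 :: "real set \<Rightarrow> real set \<Rightarrow> real set \<Rightarrow> (real \<Rightarrow> real \<Rightarrow> real \<Rightarrow> real) \<Rightarrow> real \<Rightarrow> real" where
  "marg_S1 X Y Z f s1 = (LINT t:X|lborel. marg_TS1 X Y Z f t s1)"

definition marg_S2 :: "real set \<Rightarrow> real set \<Rightarrow> real set \<Rightarrow> (real \<Rightarrow> real \<Rightarrow> real \<Rightarrow> real) \<Rightarrow> real \<Rightarrow> real" where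
  "marg_S2 X Y Z f s2 = (LINT t:X|lborel. marg_TS2 X Y Z f t s2)"

definition i_sx_cap :: "real set \<Rightarrow> real set \<Rightarrow> real set \<Rightarrow> (real \<Rightarrow> real \<Rightarrow> real \<Rightarrow> real) \<Rightarrow> real \<Rightarrow> real \<Rightarrow> real \<Rightarrow> real" where
  "i_sx_cap X Y Z f t s1 s2 =
     log 2 ((marg_TS1 X Y Z f t s1 + marg_TS2 X Y Z f t s2) /
            (marg_T X Y Z f t * (marg_S1 X Y Z f s1 + marg_S2 X Y Z f s2)))"

definition I_sx_cap :: "real set \<Rightarrow> real set \<Rightarrow> real set \<Rightarrow> (real \<Rightarrow> real \<Rightarrow> real \<Rightarrow> real) \<Rightarrow> real" where
  "I_sx_cap X Y Z f =
     (LINT x:(X \<times> Y \<times> Z)|M3. f (fst x) (fst (snd x)) (snd (snd x)) *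
        i_sx_cap X Y Z f (fst x) (fst (snd x)) (snd (snd x)))"

end

theory Submission
  imports Defs
begin

lemma set_int_mult_bdd:
  fixes h k :: "'a \<Rightarrow> real"
  assumes h: "set_integrable M A h" and km: "k \<in> borel_measurable M"
    and kb: "\<And>x. x \<in> A \<Longrightarrow> \<bar>k x\<bar> \<le> C"
  shows "set_integrable M A (\<lambda>x. h x * k x)"
proof -
  have hi: "integrable M (\<lambda>x. indicator A x *\<^sub>R h x)" using h by (simp add: set_integrable_def)
  have i1: "integrable M (\<lambda>x. \<bar>C\<bar> * (indicator A x *\<^sub>R h x))" using hi by (rule integrable_mult_right)
  have m1: "(\<lambda>x. indicator A x *\<^sub>R (h x * k x)) \<in> borel_measurable M"
  proof -
    have "(\<lambda>x. (indicator A x *\<^sub>R h x) * k x) \<in> borel_measurable M"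
      by (rule borel_measurable_times[OF borel_measurable_integrable[OF hi] km])
    then show ?thesis by (simp add: mult.assoc)
  qed
  have b1: "\<forall>x. norm (indicator A x *\<^sub>R (h x * k x)) \<le> norm (\<bar>C\<bar> * (indicator A x *\<^sub>R h x))"
  proof
    fix x show "norm (indicator A x *\<^sub>R (h x * k x)) \<le> norm (\<bar>C\<bar> * (indicator A x *\<^sub>R h x))"
    proof (cases "x \<in> A")
      case True
      then have "\<bar>k x\<bar> \<le> \<bar>C\<bar>" using kb[OF True] by simp
      then have "\<bar>h x\<bar> * \<bar>k x\<bar> \<le> \<bar>h x\<bar> * \<bar>C\<bar>" by (rule mult_left_mono) simp
      then show ?thesis using True by (simp add: abs_mult mult.commute)
    qed simp
  qed
  show ?thesis unfolding set_integrable_def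
    by (rule Bochner_Integration.integrable_bound[OF i1 m1]) (use b1 in auto)
qed

lemma set_int_nz:
  fixes p :: "'a \<Rightarrow> real"
  assumes "(LINT y:A|M. p y) \<noteq> 0" shows "set_integrable M A p"
  using assms not_integrable_integral_eq unfolding set_integrable_def set_lebesgue_integral_def by blast

lemma fin_meas:
  fixes p :: "real \<Rightarrow> real"
  assumes A: "A \<in> sets lborel" and nz: "(LINT y:A|lborel. p y) \<noteq> 0"
    and lb: "\<And>y. y \<in> A \<Longrightarrow> p y \<ge> \<xi>" and xi: "\<xi> > 0"
  shows "emeasure lborel A < \<infinity>"
proof -
  have pi: "set_integrable lborel A p" by (rule set_int_nz[OF nz])
  have "set_integrable lborel A (\<lambda>y. p y * (1/\<xi>))" using pi by auto
  then have "set_integrable lborel A (\<lambda>y. 1::real)"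
    apply (rule set_integrable_bound)
    using A apply (simp add: set_borel_measurable_def)
    using lb xi by (auto intro!: AE_I2 simp: field_simps intro: order_trans[OF lb abs_ge_self])
  then have "integrable lborel (indicator A :: real \<Rightarrow> real)" by (simp add: set_integrable_def)
  then show ?thesis by (simp add: integrable_indicator_iff)
qed

lemma bnd_int:
  fixes q :: "real \<Rightarrow> real"
  assumes A: "A \<in> sets lborel" and fin: "emeasure lborel A < \<infinity>"
    and qm: "q \<in> borel_measurable lborel" and qb: "\<And>y. \<bar>q y\<bar> \<le> C"
  shows "set_integrable lborel A q" "\<bar>LINT y:A|lborel. q y\<bar> \<le> C * measure lborel A"
proof -
  have ci: "set_integrable lborel A (\<lambda>y. C)"
    using A fin unfolding set_integrable_def by (simp add: integrable_indicator_iff)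
  show qi: "set_integrable lborel A q"
    apply (rule set_integrable_bound[OF ci])
    using A qm apply (simp add: set_borel_measurable_def)
    using qb by (auto intro!: AE_I2 intro: order_trans[OF qb abs_ge_self])
  have "\<bar>LINT y:A|lborel. q y\<bar> \<le> (LINT y:A|lborel. \<bar>q y\<bar>)"
    unfolding set_lebesgue_integral_def
    by (rule order_trans[OF integral_abs_bound]) (auto intro!: eq_refl Bochner_Integration.integral_cong split: split_indicator)
  also have "\<dots> \<le> (LINT y:A|lborel. C)"
    by (rule set_integral_mono[OF set_integrable_abs[OF qi] ci qb])
  also have "\<dots> = C * measure lborel A"
    using A fin by (simp add: set_lebesgue_integral_def)
  finally show "\<bar>LINT y:A|lborel. q y\<bar> \<le> C * measure lborel A" .
qed

lemma lin_int:
  fixes p q p' :: "real \<Rightarrow> real"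
  assumes A: "A \<in> sets lborel" and fin: "emeasure lborel A < \<infinity>"
    and nz: "(LINT y:A|lborel. p y) \<noteq> 0"
    and qm: "q \<in> borel_measurable lborel" and qb: "\<And>y. \<bar>q y\<bar> \<le> C"
    and eq: "\<And>y. y \<in> A \<Longrightarrow> p' y = p y + e * q y"
  shows "(LINT y:A|lborel. p' y) = (LINT y:A|lborel. p y) + e * (LINT y:A|lborel. q y)"
proof -
  have "(LINT y:A|lborel. p' y) = (LINT y:A|lborel. p y + e * q y)"
    using A eq by (intro set_lebesgue_integral_cong) auto
  also have "\<dots> = (LINT y:A|lborel. p y) + (LINT y:A|lborel. e * q y)"
    using set_int_nz[OF nz] bnd_int(1)[OF A fin qm qb] by (intro set_integral_add(2)) auto
  finally show ?thesis by simp
qed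


lemma hm_comp:
  assumes hm: "(\<lambda>x. h (fst x) (fst (snd x)) (snd (snd x))) \<in> borel_measurable M3"
    and g: "g \<in> measurable N M3"
  shows "(\<lambda>x. h (fst (g x)) (fst (snd (g x))) (snd (snd (g x)))) \<in> borel_measurable N"
  using measurable_compose[OF g hm] by (simp add: o_def)

lemma meas_all:
  assumes hm: "(\<lambda>x. h (fst x) (fst (snd x)) (snd (snd x))) \<in> borel_measurable M3"
    and X: "X \<in> sets lborel" and Y: "Y \<in> sets lborel" and Z: "Z \<in> sets lborel"
  shows "(\<lambda>p. marg_TS1 X Y Z h (fst p) (snd p)) \<in> borel_measurable (lborel \<Otimes>\<^sub>M lborel)"
    and "(\<lambda>p. marg_TS2 X Y Z h (fst p) (snd p)) \<in> borel_measurable (lborel \<Otimes>\<^sub>M lborel)"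
    and "marg_T X Y Z h \<in> borel_measurable lborel"
    and "marg_S1 X Y Z h \<in> borel_measurable lborel"
    and "marg_S2 X Y Z h \<in> borel_measurable lborel"
proof -
  have m: "(\<lambda>q. h (fst (fst q)) (snd (fst q)) (snd q)) \<in> borel_measurable ((lborel \<Otimes>\<^sub>M lborel) \<Otimes>\<^sub>M lborel)"
    using hm_comp[OF hm, of "\<lambda>q. (fst (fst q), snd (fst q), snd q)"] unfolding M3_def by simp
  have "(\<lambda>p. \<integral>s2. indicator Z s2 *\<^sub>R h (fst p) (snd p) s2 \<partial>lborel) \<in> borel_measurable (lborel \<Otimes>\<^sub>M lborel)"
    apply (rule lborel.borel_measurable_lebesgue_integral)
    using m Z by (simp add: case_prod_beta')
  then show m1: "(\<lambda>p. marg_TS1 X Y Z h (fst p) (snd p)) \<in> borel_measurable (lborel \<Otimes>\<^sub>M lborel)"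
    unfolding marg_TS1_def set_lebesgue_integral_def .
  have m': "(\<lambda>q. h (fst (fst q)) (snd q) (snd (fst q))) \<in> borel_measurable ((lborel \<Otimes>\<^sub>M lborel) \<Otimes>\<^sub>M lborel)"
    using hm_comp[OF hm, of "\<lambda>q. (fst (fst q), snd q, snd (fst q))"] unfolding M3_def by simp
  have "(\<lambda>p. \<integral>s1. indicator Y s1 *\<^sub>R h (fst p) s1 (snd p) \<partial>lborel) \<in> borel_measurable (lborel \<Otimes>\<^sub>M lborel)"
    apply (rule lborel.borel_measurable_lebesgue_integral)
    using m' Y by (simp add: case_prod_beta')
  then show m2: "(\<lambda>p. marg_TS2 X Y Z h (fst p) (snd p)) \<in> borel_measurable (lborel \<Otimes>\<^sub>M lborel)"
    unfolding marg_TS2_def set_lebesgue_integral_def .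
  have "(\<lambda>t. \<integral>s1. indicator Y s1 *\<^sub>R marg_TS1 X Y Z h t s1 \<partial>lborel) \<in> borel_measurable lborel"
    apply (rule lborel.borel_measurable_lebesgue_integral)
    using m1 Y by (simp add: case_prod_beta')
  then show "marg_T X Y Z h \<in> borel_measurable lborel"
    unfolding marg_T_def set_lebesgue_integral_def by (simp add: fun_eq_iff)
  have s1: "(\<lambda>p. marg_TS1 X Y Z h (snd p) (fst p)) \<in> borel_measurable (lborel \<Otimes>\<^sub>M lborel)"
    using measurable_compose[OF measurable_pair_swap' m1] by (simp add: o_def case_prod_beta')
  have "(\<lambda>s. \<integral>t. indicator X t *\<^sub>R marg_TS1 X Y Z h t s \<partial>lborel) \<in> borel_measurable lborel"
    apply (rule lborel.borel_measurable_lebesgue_integral)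
    using s1 X by (simp add: case_prod_beta')
  then show "marg_S1 X Y Z h \<in> borel_measurable lborel"
    unfolding marg_S1_def set_lebesgue_integral_def by (simp add: fun_eq_iff)
  have s2: "(\<lambda>p. marg_TS2 X Y Z h (snd p) (fst p)) \<in> borel_measurable (lborel \<Otimes>\<^sub>M lborel)"
    using measurable_compose[OF measurable_pair_swap' m2] by (simp add: o_def case_prod_beta')
  have "(\<lambda>s. \<integral>t. indicator X t *\<^sub>R marg_TS2 X Y Z h t s \<partial>lborel) \<in> borel_measurable lborel"
    apply (rule lborel.borel_measurable_lebesgue_integral)
    using s2 X by (simp add: case_prod_beta')
  then show "marg_S2 X Y Z h \<in> borel_measurable lborel"
    unfolding marg_S2_def set_lebesgue_integral_def by (simp add: fun_eq_iff)
qed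

definition smooth_on :: "real \<Rightarrow> (real \<Rightarrow> real) \<Rightarrow> bool" where
  "smooth_on d h \<longleftrightarrow> (\<exists>D :: nat \<Rightarrow> real \<Rightarrow> real. D 0 = h \<and>
     (\<forall>n. \<forall>e\<in>{-d<..<d}. (D n has_real_derivative D (Suc n) e) (at e)))"

lemma sm_const: "smooth_on d (\<lambda>_. c)"
  unfolding smooth_on_def
  by (rule exI[of _ "\<lambda>n. if n = 0 then (\<lambda>_. c) else (\<lambda>_. 0)"]) auto

lemma sm_add:
  assumes "smooth_on d h1" "smooth_on d h2"
  shows "smooth_on d (\<lambda>e. h1 e + h2 e)"
proof -
  obtain D1 where D1: "D1 0 = h1" "\<And>n e. e\<in>{-d<..<d} \<Longrightarrow> (D1 n has_real_derivative D1 (Suc n) e) (at e)"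
    using assms(1) unfolding smooth_on_def by blast
  obtain D2 where D2: "D2 0 = h2" "\<And>n e. e\<in>{-d<..<d} \<Longrightarrow> (D2 n has_real_derivative D2 (Suc n) e) (at e)"
    using assms(2) unfolding smooth_on_def by blast
  show ?thesis unfolding smooth_on_def
    by (rule exI[of _ "\<lambda>n e. D1 n e + D2 n e"]) (auto simp: D1 D2 intro!: derivative_intros)
qed

lemma sm_xmul:
  assumes "smooth_on d h"
  shows "smooth_on d (\<lambda>e. e * h e)"
proof -
  obtain D where D: "D 0 = h" "\<And>n e. e\<in>{-d<..<d} \<Longrightarrow> (D n has_real_derivative D (Suc n) e) (at e)"
    using assms unfolding smooth_on_def by blast
  define D' where "D' n e = e * D n e + real n * D (n - 1) e" for n e
  have "(D' n has_real_derivative D' (Suc n) e) (at e)" if e: "e\<in>{-d<..<d}" for n e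
  proof (cases n)
    case 0
    have "((\<lambda>e. e * D 0 e) has_real_derivative (1 * D 0 e + e * D (Suc 0) e)) (at e)"
      using D(2)[OF e, of 0] by (auto intro!: derivative_eq_intros)
    moreover have "D' 0 = (\<lambda>e. e * D 0 e)" by (simp add: D'_def fun_eq_iff)
    ultimately show ?thesis using 0 by (simp add: D'_def algebra_simps)
  next
    case (Suc m)
    have "((\<lambda>e. e * D n e + real n * D m e) has_real_derivative
            (1 * D n e + e * D (Suc n) e + real n * D (Suc m) e)) (at e)"
      using D(2)[OF e, of n] D(2)[OF e, of m] by (auto intro!: derivative_eq_intros)
    moreover have "D' n = (\<lambda>e. e * D n e + real n * D m e)" using Suc by (simp add: D'_def fun_eq_iff)
    ultimately show ?thesis using Suc by (simp add: D'_def algebra_simps)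
  qed
  moreover have "D' 0 = (\<lambda>e. e * h e)" by (simp add: D'_def D fun_eq_iff)
  ultimately show ?thesis unfolding smooth_on_def by blast
qed

lemma sm_ps:
  fixes c :: "nat \<Rightarrow> real"
  assumes sm: "\<And>y. \<bar>y\<bar> < R \<Longrightarrow> summable (\<lambda>n. c n * y ^ n)" and dR: "d \<le> R"
  shows "smooth_on d (\<lambda>e. \<Sum>n. c n * e ^ n)"
proof -
  have S: "\<And>y. \<bar>y\<bar> < R \<Longrightarrow> summable (\<lambda>n. (diffs ^^ k) c n * y ^ n)" for k
  proof (induction k)
    case 0 then show ?case using sm by simp
  next
    case (Suc k)
    show ?case using termdiff_converges[of y R "(diffs ^^ k) c"] Suc by simp
  qed
  define D where "D k e = (\<Sum>n. (diffs ^^ k) c n * e ^ n)" for k e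
  have "(D k has_real_derivative D (Suc k) e) (at e)" if e: "e\<in>{-d<..<d}" for k e
  proof -
    have "\<bar>e\<bar> < R" using e dR by auto
    then show ?thesis unfolding D_def
      using termdiffs_strong'[of R "(diffs ^^ k) c" e] S by (simp add: fun_eq_iff)
  qed
  moreover have "D 0 = (\<lambda>e. \<Sum>n. c n * e ^ n)" by (simp add: D_def fun_eq_iff)
  ultimately show ?thesis unfolding smooth_on_def by blast
qed

lemma sm_cong:
  assumes "smooth_on d h'" "\<And>e. e \<in> {-d<..<d} \<Longrightarrow> h e = h' e"
  shows "smooth_on d h"
proof -
  obtain D where D: "D 0 = h'" "\<And>n e. e\<in>{-d<..<d} \<Longrightarrow> (D n has_real_derivative D (Suc n) e) (at e)"
    using assms(1) unfolding smooth_on_def by blast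
  define D' where "D' n = (if n = 0 then h else D n)" for n
  have "(D' n has_real_derivative D' (Suc n) e) (at e)" if e: "e\<in>{-d<..<d}" for n e
  proof (cases n)
    case 0
    have "(h' has_real_derivative D 1 e) (at e)" using D(2)[OF e, of 0] D(1) by simp
    then have "(h has_real_derivative D 1 e) (at e)"
      by (rule has_field_derivative_transform_within_open[where S="{-d<..<d}"]) (use e assms(2) in auto)
    then show ?thesis using 0 by (simp add: D'_def)
  next
    case (Suc m) then show ?thesis using D(2)[OF e, of n] by (simp add: D'_def)
  qed
  moreover have "D' 0 = h" by (simp add: D'_def)
  ultimately show ?thesis unfolding smooth_on_def by blast
qed


lemma ps_summable:
  fixes c :: "nat \<Rightarrow> real"
  assumes cb: "\<And>n. \<bar>c n\<bar> \<le> Mc * q ^ n" and q: "0 \<le> q" and y: "\<bar>y\<bar> * q < 1"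
  shows "summable (\<lambda>n. c n * y ^ n)"
proof (rule summable_comparison_test)
  show "summable (\<lambda>n. Mc * (\<bar>y\<bar> * q) ^ n)"
    using y q by (intro summable_mult summable_geometric) auto
  show "\<exists>N. \<forall>n\<ge>N. norm (c n * y ^ n) \<le> Mc * (\<bar>y\<bar> * q) ^ n"
  proof (intro exI allI impI)
    fix n :: nat
    have "\<bar>c n\<bar> * \<bar>y\<bar> ^ n \<le> Mc * q ^ n * \<bar>y\<bar> ^ n"
      by (rule mult_right_mono[OF cb]) simp
    then show "norm (c n * y ^ n) \<le> Mc * (\<bar>y\<bar> * q) ^ n"
      by (simp add: abs_mult power_abs power_mult_distrib algebra_simps)
  qed
qed

lemma series_int:
  fixes P :: "'a \<Rightarrow> real" and r :: "nat \<Rightarrow> 'a \<Rightarrow> real"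
  assumes P: "set_integrable M A P" and rm: "\<And>n. r n \<in> borel_measurable M"
    and rb: "\<And>n x. x \<in> A \<Longrightarrow> \<bar>r n x\<bar> \<le> C * q ^ n" and q: "0 \<le> q" and C: "0 \<le> C"
    and e: "\<bar>e\<bar> * q < 1"
  shows "set_integrable M A (\<lambda>x. P x * (\<Sum>n. r n x * e ^ n))"
    and "(LINT x:A|M. P x * (\<Sum>n. r n x * e ^ n)) = (\<Sum>n. (LINT x:A|M. P x * r n x) * e ^ n)"
proof -
  define F where "F n x = indicator A x *\<^sub>R (P x * (r n x * e ^ n))" for n x
  have Fi: "integrable M (F n)" for n
  proof -
    have "set_integrable M A (\<lambda>x. P x * (r n x * e ^ n))"
    proof (rule set_int_mult_bdd[OF P])
      show "(\<lambda>x. r n x * e ^ n) \<in> borel_measurable M" using rm[of n] by measurable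
      fix x assume "x \<in> A"
      then show "\<bar>r n x * e ^ n\<bar> \<le> C * q ^ n * \<bar>e\<bar> ^ n"
        by (simp add: abs_mult power_abs mult_right_mono rb)
    qed
    then show ?thesis unfolding F_def set_integrable_def .
  qed
  have rs: "summable (\<lambda>n. r n x * e ^ n)" if "x \<in> A" for x
    by (rule ps_summable[OF rb[OF that] q e])
  have Fb: "norm (F n x) \<le> \<bar>indicator A x *\<^sub>R P x\<bar> * (C * (\<bar>e\<bar> * q) ^ n)" for n x
  proof (cases "x \<in> A")
    case True
    have "\<bar>r n x\<bar> * \<bar>e\<bar> ^ n \<le> C * q ^ n * \<bar>e\<bar> ^ n"
      by (rule mult_right_mono[OF rb[OF True]]) simp
    then have "\<bar>P x\<bar> * (\<bar>r n x\<bar> * \<bar>e\<bar> ^ n) \<le> \<bar>P x\<bar> * (C * q ^ n * \<bar>e\<bar> ^ n)"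
      by (rule mult_left_mono) simp
    then show ?thesis using True
      by (simp add: F_def abs_mult power_abs power_mult_distrib algebra_simps)
  qed (simp add: F_def)
  have Pi: "integrable M (\<lambda>x. indicator A x *\<^sub>R P x)" using P by (simp add: set_integrable_def)
  have sumF: "summable (\<lambda>n. \<integral>x. norm (F n x) \<partial>M)"
  proof (rule summable_comparison_test)
    show "summable (\<lambda>n. (\<integral>x. \<bar>indicator A x *\<^sub>R P x\<bar> \<partial>M) * (C * (\<bar>e\<bar> * q) ^ n))"
      using e q by (intro summable_mult summable_geometric) auto
    show "\<exists>N. \<forall>n\<ge>N. norm (\<integral>x. norm (F n x) \<partial>M) \<le> (\<integral>x. \<bar>indicator A x *\<^sub>R P x\<bar> \<partial>M) * (C * (\<bar>e\<bar> * q) ^ n)"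
    proof (intro exI allI impI)
      fix n :: nat
      have "(\<integral>x. norm (F n x) \<partial>M) \<le> (\<integral>x. \<bar>indicator A x *\<^sub>R P x\<bar> * (C * (\<bar>e\<bar> * q) ^ n) \<partial>M)"
        by (rule integral_mono) (use Fi Pi Fb in auto)
      also have "\<dots> = (\<integral>x. \<bar>indicator A x *\<^sub>R P x\<bar> \<partial>M) * (C * (\<bar>e\<bar> * q) ^ n)" by simp
      finally show "norm (\<integral>x. norm (F n x) \<partial>M) \<le> (\<integral>x. \<bar>indicator A x *\<^sub>R P x\<bar> \<partial>M) * (C * (\<bar>e\<bar> * q) ^ n)"
        by simp
    qed
  qed
  have sumx: "AE x in M. summable (\<lambda>n. norm (F n x))"
  proof (rule AE_I2)
    fix x
    show "summable (\<lambda>n. norm (F n x))"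
    proof (rule summable_comparison_test)
      show "summable (\<lambda>n. \<bar>indicator A x *\<^sub>R P x\<bar> * (C * (\<bar>e\<bar> * q) ^ n))"
        using e q by (intro summable_mult summable_geometric) auto
    qed (use Fb in auto)
  qed
  have eqS: "(\<lambda>x. \<Sum>n. F n x) = (\<lambda>x. indicator A x *\<^sub>R (P x * (\<Sum>n. r n x * e ^ n)))"
  proof
    fix x show "(\<Sum>n. F n x) = indicator A x *\<^sub>R (P x * (\<Sum>n. r n x * e ^ n))"
    proof (cases "x \<in> A")
      case True
      then show ?thesis using suminf_mult[OF rs[OF True], of "P x"] by (simp add: F_def)
    qed (simp add: F_def)
  qed
  show "set_integrable M A (\<lambda>x. P x * (\<Sum>n. r n x * e ^ n))"
    using integrable_suminf[OF Fi sumx sumF] unfolding eqS set_integrable_def .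
  have "(LINT x:A|M. P x * (\<Sum>n. r n x * e ^ n)) = (\<Sum>n. integral\<^sup>L M (F n))"
    using integral_suminf[OF Fi sumx sumF] unfolding eqS set_lebesgue_integral_def .
  also have "\<dots> = (\<Sum>n. (LINT x:A|M. P x * r n x) * e ^ n)"
  proof -
    have "integral\<^sup>L M (F n) = (LINT x:A|M. P x * r n x) * e ^ n" for n
    proof -
      have "integral\<^sup>L M (F n) = (LINT x:A|M. e ^ n * (P x * r n x))"
        unfolding F_def set_lebesgue_integral_def by (simp add: algebra_simps)
      then show ?thesis by simp
    qed
    then show ?thesis by simp
  qed
  finally show "(LINT x:A|M. P x * (\<Sum>n. r n x * e ^ n)) = (\<Sum>n. (LINT x:A|M. P x * r n x) * e ^ n)" .
qed

lemma coef_bound: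
  fixes P :: "'a \<Rightarrow> real" and r :: "'a \<Rightarrow> real"
  assumes P: "set_integrable M A P" and rm: "r \<in> borel_measurable M"
    and rb: "\<And>x. x \<in> A \<Longrightarrow> \<bar>r x\<bar> \<le> K"
  shows "\<bar>LINT x:A|M. P x * r x\<bar> \<le> (LINT x:A|M. \<bar>P x\<bar>) * K"
proof -
  have i1: "set_integrable M A (\<lambda>x. P x * r x)" by (rule set_int_mult_bdd[OF P rm rb])
  have "\<bar>LINT x:A|M. P x * r x\<bar> \<le> (LINT x:A|M. \<bar>P x * r x\<bar>)"
    unfolding set_lebesgue_integral_def
    by (rule order_trans[OF integral_abs_bound]) (auto intro!: eq_refl Bochner_Integration.integral_cong split: split_indicator)
  also have "\<dots> \<le> (LINT x:A|M. \<bar>P x\<bar> * K)"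
    by (rule set_integral_mono[OF set_integrable_abs[OF i1]])
       (use P in \<open>auto simp: abs_mult intro!: mult_left_mono rb set_integrable_abs\<close>)
  also have "\<dots> = (LINT x:A|M. \<bar>P x\<bar>) * K" by simp
  finally show ?thesis .
qed


lemma meas_sec:
  assumes "(\<lambda>p. F (fst p) (snd p)) \<in> borel_measurable (lborel \<Otimes>\<^sub>M lborel)"
  shows "(\<lambda>y. F a y) \<in> borel_measurable lborel" "(\<lambda>y. F y a) \<in> borel_measurable lborel"
  using measurable_compose[OF measurable_Pair1' assms, of a] measurable_compose[OF measurable_Pair2' assms, of a]
  by (simp_all add: o_def)

lemma meas_M3:
  assumes "(\<lambda>p. F (fst p) (snd p)) \<in> borel_measurable (lborel \<Otimes>\<^sub>M lborel)"
  shows "(\<lambda>x. F (fst x) (fst (snd x))) \<in> borel_measurable M3"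
    "(\<lambda>x. F (fst x) (snd (snd x))) \<in> borel_measurable M3"
proof -
  have "(\<lambda>x. (fst x, fst (snd x))) \<in> measurable M3 (lborel \<Otimes>\<^sub>M lborel)" unfolding M3_def by measurable
  from measurable_compose[OF this assms] show "(\<lambda>x. F (fst x) (fst (snd x))) \<in> borel_measurable M3"
    by (simp add: o_def)
  have "(\<lambda>x. (fst x, snd (snd x))) \<in> measurable M3 (lborel \<Otimes>\<^sub>M lborel)" unfolding M3_def by measurable
  from measurable_compose[OF this assms] show "(\<lambda>x. F (fst x) (snd (snd x))) \<in> borel_measurable M3"
    by (simp add: o_def)
qed

lemma meas_M3':
  assumes "G \<in> borel_measurable lborel"
  shows "(\<lambda>x. G (fst x)) \<in> borel_measurable M3" "(\<lambda>x. G (fst (snd x))) \<in> borel_measurable M3"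
    "(\<lambda>x. G (snd (snd x))) \<in> borel_measurable M3"
  using assms unfolding M3_def by measurable

lemma sec3:
  assumes "(\<lambda>x. h (fst x) (fst (snd x)) (snd (snd x))) \<in> borel_measurable M3"
  shows "(\<lambda>s. h t s1 s) \<in> borel_measurable lborel" "(\<lambda>s. h t s s2) \<in> borel_measurable lborel"
proof -
  have "(\<lambda>s. (t, s1, s)) \<in> measurable lborel M3" unfolding M3_def by measurable
  from hm_comp[OF assms this] show "(\<lambda>s. h t s1 s) \<in> borel_measurable lborel" by simp
  have "(\<lambda>s. (t, s, s2)) \<in> measurable lborel M3" unfolding M3_def by measurable
  from hm_comp[OF assms this] show "(\<lambda>s. h t s s2) \<in> borel_measurable lborel" by simp
qed

lemma cf_bound: "\<bar>- ((- z) ^ n) / real n\<bar> \<le> \<bar>z::real\<bar> ^ n"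
proof (cases "n = 0")
  case False
  then have "real n \<ge> 1" by simp
  moreover have "\<bar>z\<bar> ^ n \<ge> 0" by simp
  ultimately have "\<bar>z\<bar> ^ n / real n \<le> \<bar>z\<bar> ^ n" by (simp add: divide_le_eq mult_le_cancel_left1 mult_le_cancel_right1)
  then show ?thesis by (simp add: abs_divide power_abs)
qed simp



theorem mainTheorem2:
  fixes X Y Z :: "real set" and f :: "real \<Rightarrow> real \<Rightarrow> real \<Rightarrow> real" and \<xi> :: real
  assumes meas: "X \<in> sets lborel" "Y \<in> sets lborel" "Z \<in> sets lborel"
    and f_meas: "(\<lambda>x. f (fst x) (fst (snd x)) (snd (snd x))) \<in> borel_measurable M3"
    and f_int: "set_integrable M3 (X \<times> Y \<times> Z) (\<lambda>x. f (fst x) (fst (snd x)) (snd (snd x)))"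
    and f_norm: "(LINT x:(X \<times> Y \<times> Z)|M3. f (fst x) (fst (snd x)) (snd (snd x))) = 1"
    and xi_pos: "\<xi> > 0"
    and f_lb: "\<And>t s1 s2. t \<in> X \<Longrightarrow> s1 \<in> Y \<Longrightarrow> s2 \<in> Z \<Longrightarrow> f t s1 s2 \<ge> \<xi>"
    and TS1_lb: "\<And>t s1. t \<in> X \<Longrightarrow> s1 \<in> Y \<Longrightarrow> marg_TS1 X Y Z f t s1 \<ge> \<xi>"
    and TS2_lb: "\<And>t s2. t \<in> X \<Longrightarrow> s2 \<in> Z \<Longrightarrow> marg_TS2 X Y Z f t s2 \<ge> \<xi>"
    and T_lb: "\<And>t. t \<in> X \<Longrightarrow> marg_T X Y Z f t \<ge> \<xi>"
    and S1_lb: "\<And>s1. s1 \<in> Y \<Longrightarrow> marg_S1 X Y Z f s1 \<ge> \<xi>"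
    and S2_lb: "\<And>s2. s2 \<in> Z \<Longrightarrow> marg_S2 X Y Z f s2 \<ge> \<xi>"
  shows "\<forall>g :: real \<Rightarrow> real \<Rightarrow> real \<Rightarrow> real.
           (\<lambda>x. g (fst x) (fst (snd x)) (snd (snd x))) \<in> borel_measurable M3 \<and>
           (\<exists>B. \<forall>t s1 s2. \<bar>g t s1 s2\<bar> \<le> B) \<longrightarrow>
           (\<exists>\<delta>>0. \<exists>D :: nat \<Rightarrow> real \<Rightarrow> real.
              D 0 = (\<lambda>\<epsilon>. I_sx_cap X Y Z (\<lambda>t s1 s2. f t s1 s2 + \<epsilon> * g t s1 s2)) \<and>
              (\<forall>n. \<forall>\<epsilon>\<in>{-\<delta><..<\<delta>}. (D n has_real_derivative D (Suc n) \<epsilon>) (at \<epsilon>)))"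
proof (intro allI impI)
  fix g :: "real \<Rightarrow> real \<Rightarrow> real \<Rightarrow> real"
  assume "(\<lambda>x. g (fst x) (fst (snd x)) (snd (snd x))) \<in> borel_measurable M3 \<and>
           (\<exists>B. \<forall>t s1 s2. \<bar>g t s1 s2\<bar> \<le> B)"
  then obtain B where gm: "(\<lambda>x. g (fst x) (fst (snd x)) (snd (snd x))) \<in> borel_measurable M3"
    and gB: "\<And>t s1 s2. \<bar>g t s1 s2\<bar> \<le> B" by blast
  have B0: "0 \<le> B" using gB[of 0 0 0] by linarith
  note mf = meas_all[OF f_meas meas]
  note mg = meas_all[OF gm meas]
  define box where "box = X \<times> Y \<times> Z"
  have box_sets: "box \<in> sets M3" unfolding box_def M3_def using meas by auto
  have "box \<noteq> {}"
  proof
    assume "box = {}"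
    then have e: "X \<times> Y \<times> Z = {}" unfolding box_def .
    have "(LINT x:(X \<times> Y \<times> Z)|M3. f (fst x) (fst (snd x)) (snd (snd x))) = 0"
      unfolding e set_lebesgue_integral_def by simp
    then show False using f_norm by simp
  qed
  then obtain t0 y0 z0 where t0: "t0 \<in> X" and y0: "y0 \<in> Y" and z0: "z0 \<in> Z"
    unfolding box_def by auto
  have finZ: "emeasure lborel Z < \<infinity>"
    by (rule fin_meas[OF meas(3) _ f_lb[OF t0 y0] xi_pos])
       (use TS1_lb[OF t0 y0] xi_pos in \<open>auto simp: marg_TS1_def\<close>)
  have finY: "emeasure lborel Y < \<infinity>"
    by (rule fin_meas[OF meas(2) _ TS1_lb[OF t0] xi_pos])
       (use T_lb[OF t0] xi_pos in \<open>auto simp: marg_T_def\<close>)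
  have finX: "emeasure lborel X < \<infinity>"
    by (rule fin_meas[OF meas(1) _ TS1_lb[OF _ y0] xi_pos])
       (use S1_lb[OF y0] xi_pos in \<open>auto simp: marg_S1_def\<close>)
  define mX where "mX = measure lborel X"
  define mY where "mY = measure lborel Y"
  define mZ where "mZ = measure lborel Z"
  have mX0: "0 \<le> mX" and mY0: "0 \<le> mY" and mZ0: "0 \<le> mZ" by (simp_all add: mX_def mY_def mZ_def)
  define fe where "fe e = (\<lambda>t s1 s2. f t s1 s2 + e * g t s1 s2)" for e
  have lin1: "marg_TS1 X Y Z (fe e) t s1 = marg_TS1 X Y Z f t s1 + e * marg_TS1 X Y Z g t s1"
    if "t \<in> X" "s1 \<in> Y" for e t s1
    unfolding marg_TS1_def fe_def
    by (rule lin_int[OF meas(3) finZ _ sec3(1)[OF gm] gB])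
       (use TS1_lb[OF that] xi_pos in \<open>auto simp: marg_TS1_def\<close>)
  have bTS1: "\<bar>marg_TS1 X Y Z g t s1\<bar> \<le> B * mZ" for t s1
    unfolding marg_TS1_def mZ_def by (rule bnd_int(2)[OF meas(3) finZ sec3(1)[OF gm] gB])
  have lin2: "marg_TS2 X Y Z (fe e) t s2 = marg_TS2 X Y Z f t s2 + e * marg_TS2 X Y Z g t s2"
    if "t \<in> X" "s2 \<in> Z" for e t s2
    unfolding marg_TS2_def fe_def
    by (rule lin_int[OF meas(2) finY _ sec3(2)[OF gm] gB])
       (use TS2_lb[OF that] xi_pos in \<open>auto simp: marg_TS2_def\<close>)
  have bTS2: "\<bar>marg_TS2 X Y Z g t s2\<bar> \<le> B * mY" for t s2
    unfolding marg_TS2_def mY_def by (rule bnd_int(2)[OF meas(2) finY sec3(2)[OF gm] gB])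
  have linT: "marg_T X Y Z (fe e) t = marg_T X Y Z f t + e * marg_T X Y Z g t"
    if "t \<in> X" for e t
    unfolding marg_T_def
    by (rule lin_int[OF meas(2) finY _ meas_sec(1)[OF mg(1)] bTS1])
       (use T_lb[OF that] xi_pos lin1[OF that] in \<open>auto simp: marg_T_def\<close>)
  have bT: "\<bar>marg_T X Y Z g t\<bar> \<le> B * mZ * mY" for t
    unfolding marg_T_def mY_def by (rule bnd_int(2)[OF meas(2) finY meas_sec(1)[OF mg(1)] bTS1])
  have linS1: "marg_S1 X Y Z (fe e) s1 = marg_S1 X Y Z f s1 + e * marg_S1 X Y Z g s1"
    if "s1 \<in> Y" for e s1
    unfolding marg_S1_def
    by (rule lin_int[OF meas(1) finX _ meas_sec(2)[OF mg(1)] bTS1])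
       (use S1_lb[OF that] xi_pos lin1[OF _ that] in \<open>auto simp: marg_S1_def\<close>)
  have bS1: "\<bar>marg_S1 X Y Z g s1\<bar> \<le> B * mZ * mX" for s1
    unfolding marg_S1_def mX_def by (rule bnd_int(2)[OF meas(1) finX meas_sec(2)[OF mg(1)] bTS1])
  have linS2: "marg_S2 X Y Z (fe e) s2 = marg_S2 X Y Z f s2 + e * marg_S2 X Y Z g s2"
    if "s2 \<in> Z" for e s2
    unfolding marg_S2_def
    by (rule lin_int[OF meas(1) finX _ meas_sec(2)[OF mg(2)] bTS2])
       (use S2_lb[OF that] xi_pos lin2[OF _ that] in \<open>auto simp: marg_S2_def\<close>)
  have bS2: "\<bar>marg_S2 X Y Z g s2\<bar> \<le> B * mY * mX" for s2
    unfolding marg_S2_def mX_def by (rule bnd_int(2)[OF meas(1) finX meas_sec(2)[OF mg(2)] bTS2])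

  define Pf where "Pf x = f (fst x) (fst (snd x)) (snd (snd x))" for x :: "real \<times> real \<times> real"
  define Pg where "Pg x = g (fst x) (fst (snd x)) (snd (snd x))" for x :: "real \<times> real \<times> real"
  define a0 where "a0 x = marg_TS1 X Y Z f (fst x) (fst (snd x)) + marg_TS2 X Y Z f (fst x) (snd (snd x))" for x :: "real \<times> real \<times> real"
  define a1 where "a1 x = marg_TS1 X Y Z g (fst x) (fst (snd x)) + marg_TS2 X Y Z g (fst x) (snd (snd x))" for x :: "real \<times> real \<times> real"
  define e0 where "e0 x = marg_T X Y Z f (fst x)" for x :: "real \<times> real \<times> real"
  define e1 where "e1 x = marg_T X Y Z g (fst x)" for x :: "real \<times> real \<times> real"
  define b0 where "b0 x = marg_S1 X Y Z f (fst (snd x)) + marg_S2 X Y Z f (snd (snd x))" for x :: "real \<times> real \<times> real"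
  define b1 where "b1 x = marg_S1 X Y Z g (fst (snd x)) + marg_S2 X Y Z g (snd (snd x))" for x :: "real \<times> real \<times> real"
  have [measurable]: "Pf \<in> borel_measurable M3" "Pg \<in> borel_measurable M3"
    using f_meas gm by (simp_all add: Pf_def[abs_def] Pg_def[abs_def])
  have [measurable]: "a0 \<in> borel_measurable M3" "a1 \<in> borel_measurable M3"
    "e0 \<in> borel_measurable M3" "e1 \<in> borel_measurable M3"
    "b0 \<in> borel_measurable M3" "b1 \<in> borel_measurable M3"
    unfolding a0_def[abs_def] a1_def[abs_def] e0_def[abs_def] e1_def[abs_def] b0_def[abs_def] b1_def[abs_def]
    using meas_M3[OF mf(1)] meas_M3[OF mf(2)] meas_M3[OF mg(1)] meas_M3[OF mg(2)]
      meas_M3'[OF mf(3)] meas_M3'[OF mf(4)] meas_M3'[OF mf(5)]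
      meas_M3'[OF mg(3)] meas_M3'[OF mg(4)] meas_M3'[OF mg(5)]
    by (auto intro!: borel_measurable_add)
  define K where "K = B * (mZ + mY + mZ * mY + mZ * mX + mY * mX) + 1"
  have K1: "K \<ge> 1" unfolding K_def using B0 mX0 mY0 mZ0 by simp
  have a1b: "\<bar>a1 x\<bar> \<le> K" for x
  proof -
    have "\<bar>a1 x\<bar> \<le> B * mZ + B * mY" unfolding a1_def
      using bTS1[of "fst x" "fst (snd x)"] bTS2[of "fst x" "snd (snd x)"] by linarith
    also have "\<dots> \<le> K" unfolding K_def using B0 mX0 mY0 mZ0
      by (simp add: algebra_simps)
    finally show ?thesis .
  qed
  have e1b: "\<bar>e1 x\<bar> \<le> K" for x
  proof -
    have "\<bar>e1 x\<bar> \<le> B * (mZ * mY)" unfolding e1_def using bT[of "fst x"] by (simp add: mult.assoc)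
    also have "\<dots> \<le> K" unfolding K_def using B0 mX0 mY0 mZ0
      by (simp add: algebra_simps)
    finally show ?thesis .
  qed
  have b1b: "\<bar>b1 x\<bar> \<le> K" for x
  proof -
    have "\<bar>b1 x\<bar> \<le> B * (mZ * mX) + B * (mY * mX)" unfolding b1_def
      using bS1[of "fst (snd x)"] bS2[of "snd (snd x)"] by (simp add: mult.assoc)
    also have "\<dots> \<le> K" unfolding K_def using B0 mX0 mY0 mZ0
      by (simp add: algebra_simps)
    finally show ?thesis .
  qed
  have boxD: "fst x \<in> X" "fst (snd x) \<in> Y" "snd (snd x) \<in> Z" if "x \<in> box" for x
    using that unfolding box_def by auto
  have a0l: "a0 x \<ge> \<xi>" if "x \<in> box" for x
    using TS1_lb[OF boxD(1,2)[OF that]] TS2_lb[OF boxD(1,3)[OF that]] xi_pos unfolding a0_def by linarith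
  have e0l: "e0 x \<ge> \<xi>" if "x \<in> box" for x
    using T_lb[OF boxD(1)[OF that]] unfolding e0_def by linarith
  have b0l: "b0 x \<ge> \<xi>" if "x \<in> box" for x
    using S1_lb[OF boxD(2)[OF that]] S2_lb[OF boxD(3)[OF that]] xi_pos unfolding b0_def by linarith
  have Pfl: "Pf x \<ge> \<xi>" if "x \<in> box" for x
    using f_lb[OF boxD[OF that]] unfolding Pf_def .
  have PgB: "\<bar>Pg x\<bar> \<le> B" for x unfolding Pg_def by (rule gB)
  define Kq where "Kq = K / \<xi>"
  have Kq0: "Kq > 0" unfolding Kq_def using K1 xi_pos by simp
  have ratb: "\<bar>p / q\<bar> \<le> Kq" if "\<bar>p\<bar> \<le> K" "q \<ge> \<xi>" for p q
  proof -
    have "\<bar>p / q\<bar> = \<bar>p\<bar> / q" using that xi_pos by (simp add: abs_divide)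
    also have "\<dots> \<le> K / q" using that xi_pos by (simp add: divide_right_mono)
    also have "\<dots> \<le> K / \<xi>" using that xi_pos K1 by (simp add: divide_left_mono)
    finally show ?thesis unfolding Kq_def .
  qed
  define u where "u x = a1 x / a0 x" for x :: "real \<times> real \<times> real"
  define v where "v x = e1 x / e0 x" for x :: "real \<times> real \<times> real"
  define w where "w x = b1 x / b0 x" for x :: "real \<times> real \<times> real"
  have ub: "\<bar>u x\<bar> \<le> Kq" "\<bar>v x\<bar> \<le> Kq" "\<bar>w x\<bar> \<le> Kq" if "x \<in> box" for x
    unfolding u_def v_def w_def using ratb a1b e1b b1b a0l e0l b0l that by auto
  define cf where "cf n z = - ((- z) ^ n) / real n" for n :: nat and z :: real
  define rho where "rho n x = (cf n (u x) - cf n (v x) - cf n (w x)) / ln 2" for n x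
  have rho_m [measurable]: "rho n \<in> borel_measurable M3" for n
    unfolding rho_def[abs_def] cf_def u_def[abs_def] v_def[abs_def] w_def[abs_def] by measurable
  have rho_b: "\<bar>rho n x\<bar> \<le> (3 / ln 2) * Kq ^ n" if "x \<in> box" for n x
  proof -
    have c: "\<bar>cf n z\<bar> \<le> Kq ^ n" if "\<bar>z\<bar> \<le> Kq" for z
      unfolding cf_def using cf_bound[of z n] power_mono[OF that abs_ge_zero[of z], of n] by linarith
    have "\<bar>cf n (u x) - cf n (v x) - cf n (w x)\<bar> \<le> 3 * Kq ^ n"
      using c[OF ub(1)[OF that]] c[OF ub(2)[OF that]] c[OF ub(3)[OF that]] by linarith
    then show ?thesis unfolding rho_def by (simp add: abs_divide divide_right_mono)
  qed
  define S where "S e x = (\<Sum>n. rho n x * e ^ n)" for e x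
  define L0 where "L0 x = log 2 (a0 x / (e0 x * b0 x))" for x :: "real \<times> real \<times> real"
  have L0_m [measurable]: "L0 \<in> borel_measurable M3" unfolding L0_def[abs_def] by measurable
  define \<delta> where "\<delta> = min (1 / (2 * Kq)) (\<xi> / (2 * B + 1))"
  have \<delta>0: "\<delta> > 0" unfolding \<delta>_def using Kq0 xi_pos B0 by simp
  have eKq: "\<bar>e\<bar> * Kq < 1 / 2" if "\<bar>e\<bar> < \<delta>" for e
  proof -
    have "\<bar>e\<bar> < 1 / (2 * Kq)" using that unfolding \<delta>_def by simp
    then show ?thesis using Kq0 by (simp add: field_simps)
  qed
  have eB: "\<bar>e\<bar> * B \<le> \<xi> / 2" if "\<bar>e\<bar> < \<delta>" for e
  proof -
    have "\<bar>e\<bar> \<le> \<xi> / (2 * B + 1)" using that unfolding \<delta>_def by simp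
    then have "\<bar>e\<bar> * B \<le> \<xi> / (2 * B + 1) * B" by (rule mult_right_mono[OF _ B0])
    also have "\<dots> \<le> \<xi> / 2" using B0 xi_pos by (simp add: field_simps)
    finally show ?thesis .
  qed

  have ser: "(\<lambda>n. cf n y * e ^ n) sums ln (1 + e * y)" if "\<bar>e * y\<bar> < 1" for e y
  proof -
    have "(- (e * y)) ^ n = (- y) ^ n * e ^ n" for n
      by (metis mult.commute mult_minus_left power_mult_distrib)
    then have "(\<lambda>n. - ((- (e * y)) ^ n) / real n) = (\<lambda>n. cf n y * e ^ n)"
      by (simp add: cf_def fun_eq_iff)
    with ln_series'[OF that] show ?thesis by simp
  qed
  have key: "fe e (fst x) (fst (snd x)) (snd (snd x)) * i_sx_cap X Y Z (fe e) (fst x) (fst (snd x)) (snd (snd x))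
     = (Pf x + e * Pg x) * (L0 x + S e x)" if x: "x \<in> box" and e: "\<bar>e\<bar> < \<delta>" for x e
  proof -
    note bx = boxD[OF x]
    have i: "i_sx_cap X Y Z (fe e) (fst x) (fst (snd x)) (snd (snd x))
        = log 2 ((a0 x + e * a1 x) / ((e0 x + e * e1 x) * (b0 x + e * b1 x)))"
      unfolding i_sx_cap_def a0_def a1_def e0_def e1_def b0_def b1_def
      using lin1[OF bx(1,2)] lin2[OF bx(1,3)] linT[OF bx(1)] linS1[OF bx(2)] linS2[OF bx(3)]
      by (simp add: algebra_simps)
    define z1 where "z1 = e * u x"
    define z2 where "z2 = e * v x"
    define z3 where "z3 = e * w x"
    have zb: "\<bar>e * y\<bar> < 1 / 2" if "\<bar>y\<bar> \<le> Kq" for y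
    proof -
      have "\<bar>e * y\<bar> \<le> \<bar>e\<bar> * Kq" unfolding abs_mult by (rule mult_left_mono[OF that]) simp
      then show ?thesis using eKq[OF e] by linarith
    qed
    have z1b: "\<bar>z1\<bar> < 1/2" and z2b: "\<bar>z2\<bar> < 1/2" and z3b: "\<bar>z3\<bar> < 1/2"
      unfolding z1_def z2_def z3_def using zb ub[OF x] by auto
    have pa: "a0 x > 0" "e0 x > 0" "b0 x > 0" using a0l[OF x] e0l[OF x] b0l[OF x] xi_pos by auto
    have pz: "1 + z1 > 0" "1 + z2 > 0" "1 + z3 > 0" using z1b z2b z3b by auto
    have r1: "a0 x + e * a1 x = a0 x * (1 + z1)" unfolding z1_def u_def using pa by (simp add: field_simps)
    have r2: "e0 x + e * e1 x = e0 x * (1 + z2)" unfolding z2_def v_def using pa by (simp add: field_simps)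
    have r3: "b0 x + e * b1 x = b0 x * (1 + z3)" unfolding z3_def w_def using pa by (simp add: field_simps)
    have lg: "log 2 ((a0 x + e * a1 x) / ((e0 x + e * e1 x) * (b0 x + e * b1 x)))
       = (ln (a0 x) + ln (1 + z1) - (ln (e0 x) + ln (1 + z2) + (ln (b0 x) + ln (1 + z3)))) / ln 2"
      unfolding r1 r2 r3 log_def using pa pz by (simp add: ln_mult ln_div)
    have l0: "L0 x = (ln (a0 x) - (ln (e0 x) + ln (b0 x))) / ln 2"
      unfolding L0_def log_def using pa by (simp add: ln_mult ln_div)
    have s1: "(\<lambda>n. cf n (u x) * e ^ n) sums ln (1 + z1)" unfolding z1_def by (rule ser) (use z1b z1_def in auto)
    have s2: "(\<lambda>n. cf n (v x) * e ^ n) sums ln (1 + z2)" unfolding z2_def by (rule ser) (use z2b z2_def in auto)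
    have s3: "(\<lambda>n. cf n (w x) * e ^ n) sums ln (1 + z3)" unfolding z3_def by (rule ser) (use z3b z3_def in auto)
    have "(\<lambda>n. (cf n (u x) * e ^ n - cf n (v x) * e ^ n - cf n (w x) * e ^ n) / ln 2) sums
        ((ln (1 + z1) - ln (1 + z2) - ln (1 + z3)) / ln 2)"
      by (intro sums_divide sums_diff s1 s2 s3)
    moreover have "(\<lambda>n. (cf n (u x) * e ^ n - cf n (v x) * e ^ n - cf n (w x) * e ^ n) / ln 2) = (\<lambda>n. rho n x * e ^ n)"
      by (simp add: rho_def fun_eq_iff field_simps)
    ultimately have Se: "S e x = (ln (1 + z1) - ln (1 + z2) - ln (1 + z3)) / ln 2"
      unfolding S_def by (simp add: sums_iff)
    have "i_sx_cap X Y Z (fe e) (fst x) (fst (snd x)) (snd (snd x)) = L0 x + S e x"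
      unfolding i lg l0 Se by (simp add: field_simps)
    moreover have "fe e (fst x) (fst (snd x)) (snd (snd x)) = Pf x + e * Pg x"
      by (simp add: fe_def Pf_def Pg_def)
    ultimately show ?thesis by simp
  qed
  have Ieq: "I_sx_cap X Y Z (\<lambda>t s1 s2. f t s1 s2 + e * g t s1 s2) = (LINT x:box|M3. (Pf x + e * Pg x) * (L0 x + S e x))"
    if e: "\<bar>e\<bar> < \<delta>" for e
  proof -
    have "I_sx_cap X Y Z (\<lambda>t s1 s2. f t s1 s2 + e * g t s1 s2) =
       (LINT x:box|M3. fe e (fst x) (fst (snd x)) (snd (snd x)) * i_sx_cap X Y Z (fe e) (fst x) (fst (snd x)) (snd (snd x)))"
      unfolding I_sx_cap_def box_def fe_def by simp
    also have "\<dots> = (LINT x:box|M3. (Pf x + e * Pg x) * (L0 x + S e x))"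
      by (rule set_lebesgue_integral_cong[OF box_sets]) (use key e in auto)
    finally show ?thesis .
  qed

  have Pfi: "set_integrable M3 box Pf" using f_int by (simp add: box_def Pf_def[abs_def])
  have sbm: "set_borel_measurable M3 box h" if "h \<in> borel_measurable M3" for h :: "real \<times> real \<times> real \<Rightarrow> real"
    unfolding set_borel_measurable_def
    using box_sets that by measurable
  have Pgi: "set_integrable M3 box Pg"
  proof (rule set_integrable_bound[OF _ sbm])
    show "set_integrable M3 box (\<lambda>x. B / \<xi> * Pf x)" using Pfi by auto
    show "AE x in M3. x \<in> box \<longrightarrow> norm (Pg x) \<le> norm (B / \<xi> * Pf x)"
    proof (intro AE_I2 impI)
      fix x assume x: "x \<in> box"
      have "B = B / \<xi> * \<xi>" using xi_pos by simp
      also have "\<dots> \<le> B / \<xi> * Pf x" using Pfl[OF x] B0 xi_pos by (intro mult_left_mono) auto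
      finally have "B \<le> B / \<xi> * Pf x" .
      from order_trans[OF order_trans[OF PgB[of x] this] abs_ge_self]
      show "norm (Pg x) \<le> norm (B / \<xi> * Pf x)" by simp
    qed
  qed simp
  have C3: "0 \<le> 3 / ln (2::real)" by simp
  have eK1: "\<bar>e\<bar> * Kq < 1" if "\<bar>e\<bar> < \<delta>" for e using eKq[OF that] by linarith
  have Sdef: "S e = (\<lambda>x. \<Sum>n. rho n x * e ^ n)" for e by (simp add: S_def[abs_def])
  have sf: "set_integrable M3 box (\<lambda>x. Pf x * S e x)"
    "(LINT x:box|M3. Pf x * S e x) = (\<Sum>n. (LINT x:box|M3. Pf x * rho n x) * e ^ n)" if "\<bar>e\<bar> < \<delta>" for e
    using series_int[of M3 box Pf rho "3 / ln 2" Kq e] Pfi rho_m rho_b Kq0 C3 eK1[OF that] unfolding Sdef by auto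
  have sg: "set_integrable M3 box (\<lambda>x. Pg x * S e x)"
    "(LINT x:box|M3. Pg x * S e x) = (\<Sum>n. (LINT x:box|M3. Pg x * rho n x) * e ^ n)" if "\<bar>e\<bar> < \<delta>" for e
    using series_int[of M3 box Pg rho "3 / ln 2" Kq e] Pgi rho_m rho_b Kq0 C3 eK1[OF that] unfolding Sdef by auto
  have alg: "(\<lambda>x. (Pf x + e * Pg x) * (L0 x + S e x)) =
      (\<lambda>x. (Pf x * L0 x + e * (Pg x * L0 x)) + (Pf x * S e x + e * (Pg x * S e x)))" for e
    by (simp add: fun_eq_iff algebra_simps)
  have sm: "smooth_on \<delta> (\<lambda>\<epsilon>. I_sx_cap X Y Z (\<lambda>t s1 s2. f t s1 s2 + \<epsilon> * g t s1 s2))"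
  proof (cases "set_integrable M3 box (\<lambda>x. Pf x * L0 x)")
    case True
    have L0i: "set_integrable M3 box L0"
    proof (rule set_integrable_bound[OF _ sbm])
      show "set_integrable M3 box (\<lambda>x. 1 / \<xi> * (Pf x * L0 x))" using True by auto
      show "AE x in M3. x \<in> box \<longrightarrow> norm (L0 x) \<le> norm (1 / \<xi> * (Pf x * L0 x))"
      proof (intro AE_I2 impI)
        fix x assume x: "x \<in> box"
        have "\<bar>L0 x\<bar> * \<xi> \<le> \<bar>L0 x\<bar> * Pf x" using Pfl[OF x] by (intro mult_left_mono) auto
        then show "norm (L0 x) \<le> norm (1 / \<xi> * (Pf x * L0 x))"
          using xi_pos Pfl[OF x] by (simp add: abs_mult field_simps)
      qed
    qed simp
    have PgL0i: "set_integrable M3 box (\<lambda>x. Pg x * L0 x)"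
    proof (rule set_integrable_bound[OF _ sbm])
      show "set_integrable M3 box (\<lambda>x. B * L0 x)" using L0i by auto
      show "AE x in M3. x \<in> box \<longrightarrow> norm (Pg x * L0 x) \<le> norm (B * L0 x)"
        using PgB B0 by (intro AE_I2 impI) (simp add: abs_mult mult_right_mono)
    qed simp
    define c0 where "c0 = (LINT x:box|M3. Pf x * L0 x)"
    define c1 where "c1 = (LINT x:box|M3. Pg x * L0 x)"
    define cF where "cF n = (LINT x:box|M3. Pf x * rho n x)" for n
    define cG where "cG n = (LINT x:box|M3. Pg x * rho n x)" for n
    have eqA: "I_sx_cap X Y Z (\<lambda>t s1 s2. f t s1 s2 + e * g t s1 s2) =
        c0 + e * c1 + ((\<Sum>n. cF n * e ^ n) + e * (\<Sum>n. cG n * e ^ n))" if e: "e \<in> {-\<delta><..<\<delta>}" for e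
    proof -
      have e': "\<bar>e\<bar> < \<delta>" using e by auto
      have i1: "set_integrable M3 box (\<lambda>x. Pf x * L0 x + e * (Pg x * L0 x))"
        using True PgL0i by auto
      have i2: "set_integrable M3 box (\<lambda>x. Pf x * S e x + e * (Pg x * S e x))"
        using sf(1)[OF e'] sg(1)[OF e'] by auto
      have "I_sx_cap X Y Z (\<lambda>t s1 s2. f t s1 s2 + e * g t s1 s2) =
          (LINT x:box|M3. (Pf x * L0 x + e * (Pg x * L0 x)) + (Pf x * S e x + e * (Pg x * S e x)))"
        unfolding Ieq[OF e'] alg ..
      also have "\<dots> = (LINT x:box|M3. Pf x * L0 x + e * (Pg x * L0 x)) + (LINT x:box|M3. Pf x * S e x + e * (Pg x * S e x))"
        by (rule set_integral_add(2)[OF i1 i2])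
      also have "(LINT x:box|M3. Pf x * L0 x + e * (Pg x * L0 x)) = c0 + e * c1"
        unfolding c0_def c1_def using True PgL0i by (subst set_integral_add(2)) auto
      also have "(LINT x:box|M3. Pf x * S e x + e * (Pg x * S e x)) =
          (\<Sum>n. cF n * e ^ n) + e * (\<Sum>n. cG n * e ^ n)"
        unfolding cF_def cG_def using sf[OF e'] sg[OF e']
        by (subst set_integral_add(2)) auto
      finally show ?thesis .
    qed
    have dR: "\<delta> \<le> 1 / Kq" unfolding \<delta>_def using Kq0 by (simp add: min_le_iff_disj field_simps)
    have yK: "\<bar>y\<bar> * Kq < 1" if "\<bar>y\<bar> < 1 / Kq" for y using that Kq0 by (simp add: field_simps)
    have cFb: "\<bar>cF n\<bar> \<le> ((LINT x:box|M3. \<bar>Pf x\<bar>) * (3 / ln 2)) * Kq ^ n" for n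
      using coef_bound[OF Pfi rho_m rho_b, of n] unfolding cF_def by (simp add: mult.assoc)
    have cGb: "\<bar>cG n\<bar> \<le> ((LINT x:box|M3. \<bar>Pg x\<bar>) * (3 / ln 2)) * Kq ^ n" for n
      using coef_bound[OF Pgi rho_m rho_b, of n] unfolding cG_def by (simp add: mult.assoc)
    have smF: "smooth_on \<delta> (\<lambda>e. \<Sum>n. cF n * e ^ n)"
      by (rule sm_ps[OF _ dR]) (rule ps_summable[OF cFb less_imp_le[OF Kq0] yK])
    have smG: "smooth_on \<delta> (\<lambda>e. \<Sum>n. cG n * e ^ n)"
      by (rule sm_ps[OF _ dR]) (rule ps_summable[OF cGb less_imp_le[OF Kq0] yK])
    have smAll: "smooth_on \<delta> (\<lambda>e. c0 + e * c1 + ((\<Sum>n. cF n * e ^ n) + e * (\<Sum>n. cG n * e ^ n)))"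
      using sm_add[OF sm_add[OF sm_const sm_xmul[OF sm_const]] sm_add[OF smF sm_xmul[OF smG]]] by simp
    show ?thesis by (rule sm_cong[OF smAll eqA])
  next
    case False
    have eqB: "I_sx_cap X Y Z (\<lambda>t s1 s2. f t s1 s2 + e * g t s1 s2) = 0" if e: "e \<in> {-\<delta><..<\<delta>}" for e
    proof -
      have e': "\<bar>e\<bar> < \<delta>" using e by auto
      have nT: "\<not> set_integrable M3 box (\<lambda>x. (Pf x + e * Pg x) * (L0 x + S e x))"
      proof
        assume T: "set_integrable M3 box (\<lambda>x. (Pf x + e * Pg x) * (L0 x + S e x))"
        have i2: "set_integrable M3 box (\<lambda>x. Pf x * S e x + e * (Pg x * S e x))"
          using sf(1)[OF e'] sg(1)[OF e'] by auto
        have Q: "set_integrable M3 box (\<lambda>x. (Pf x + e * Pg x) * L0 x)"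
        proof -
          have "set_integrable M3 box (\<lambda>x. (Pf x + e * Pg x) * (L0 x + S e x) - (Pf x * S e x + e * (Pg x * S e x)))"
            by (rule set_integral_diff(1)[OF T i2])
          moreover have "(\<lambda>x. (Pf x + e * Pg x) * (L0 x + S e x) - (Pf x * S e x + e * (Pg x * S e x)))
              = (\<lambda>x. (Pf x + e * Pg x) * L0 x)" by (simp add: fun_eq_iff algebra_simps)
          ultimately show ?thesis by simp
        qed
        have L0i: "set_integrable M3 box L0"
        proof (rule set_integrable_bound[OF _ sbm])
          show "set_integrable M3 box (\<lambda>x. 2 / \<xi> * ((Pf x + e * Pg x) * L0 x))" using Q by auto
          show "AE x in M3. x \<in> box \<longrightarrow> norm (L0 x) \<le> norm (2 / \<xi> * ((Pf x + e * Pg x) * L0 x))"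
          proof (intro AE_I2 impI)
            fix x assume x: "x \<in> box"
            have "\<bar>e * Pg x\<bar> \<le> \<bar>e\<bar> * B" unfolding abs_mult by (rule mult_left_mono[OF PgB]) simp
            then have ge: "Pf x + e * Pg x \<ge> \<xi> / 2" using eB[OF e'] Pfl[OF x] by linarith
            have P1: "2 / \<xi> * (Pf x + e * Pg x) \<ge> 1" using ge xi_pos by (simp add: field_simps)
            have pos: "Pf x + e * Pg x > 0" using ge xi_pos by linarith
            have c2: "2 / \<xi> > 0" using xi_pos by simp
            have "\<bar>L0 x\<bar> \<le> (2 / \<xi> * (Pf x + e * Pg x)) * \<bar>L0 x\<bar>"
              using mult_right_mono[OF P1 abs_ge_zero[of "L0 x"]] by simp
            also have "\<dots> = norm (2 / \<xi> * ((Pf x + e * Pg x) * L0 x))"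
              by (simp only: real_norm_def abs_mult abs_of_pos[OF pos] abs_of_pos[OF c2] mult.assoc)
            finally show "norm (L0 x) \<le> norm (2 / \<xi> * ((Pf x + e * Pg x) * L0 x))" by simp
          qed
        qed simp
        have PgL0i: "set_integrable M3 box (\<lambda>x. Pg x * L0 x)"
        proof (rule set_integrable_bound[OF _ sbm])
          show "set_integrable M3 box (\<lambda>x. B * L0 x)" using L0i by auto
          show "AE x in M3. x \<in> box \<longrightarrow> norm (Pg x * L0 x) \<le> norm (B * L0 x)"
            using PgB B0 by (intro AE_I2 impI) (simp add: abs_mult mult_right_mono)
        qed simp
        have "set_integrable M3 box (\<lambda>x. (Pf x + e * Pg x) * L0 x - e * (Pg x * L0 x))"
          using Q PgL0i by auto
        moreover have "(\<lambda>x. (Pf x + e * Pg x) * L0 x - e * (Pg x * L0 x)) = (\<lambda>x. Pf x * L0 x)"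
          by (simp add: fun_eq_iff algebra_simps)
        ultimately show False using False by simp
      qed
      show ?thesis unfolding Ieq[OF e'] using nT unfolding set_integrable_def set_lebesgue_integral_def
        by (rule not_integrable_integral_eq)
    qed
    show ?thesis by (rule sm_cong[OF sm_const eqB])
  qed
  show "\<exists>\<delta>>0. \<exists>D :: nat \<Rightarrow> real \<Rightarrow> real.
              D 0 = (\<lambda>\<epsilon>. I_sx_cap X Y Z (\<lambda>t s1 s2. f t s1 s2 + \<epsilon> * g t s1 s2)) \<and>
              (\<forall>n. \<forall>\<epsilon>\<in>{-\<delta><..<\<delta>}. (D n has_real_derivative D (Suc n) \<epsilon>) (at \<epsilon>))"
    using sm \<delta>0 unfolding smooth_on_def by blast
qed

end
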